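(* Let $\alpha=2\sqrt7-4$ and fix $\varepsilon>0$. For every balanced tetrahedral erasure channel $W$ with $Q(W)\le\alpha-\varepsilon$, there exists an integer $m>0$ such that for all $n\ge m$, every $n$th-generation descendant $W'$ of $W$ satisfies $Q(W')\ge Q(W)(1+\varepsilon/8)$ (i.e. $Q(W_n)\ge Q(W)(1+\varepsilon/8)$ for all $n\ge m$).
   Context: $\mathrm{TEC}(p,q,r,s,t)$ denotes a tetrahedral erasure channel with parameters $p,q,r,s,t\ge0$ summing to $1$. Its entropy is $H=\frac{q+r+s}{2}+t$, its edge mass is $E=q+r+s$, and its Quetelet index is $Q=E/(H(1-H))$ (defined when $0<H<1$). It is balanced if $q=r=s$. For $W=\mathrm{TEC}(p,q,r,s,t)$, the serial child is $W^{s}=\mathrm{TEC}(p^2,\ ps+sq+qp,\ pq+qr+rp,\ pr+rs+sp,\ 1-\text{(sum of the other four)})$ and the parallel child is $W^{p}=\mathrm{TEC}(1-\text{(sum of the other four)},\ ts+sq+qt,\ tq+qr+rt,\ tr+rs+st,\ t^2)$. The $0$th-generation descendant of $W$ is $W$; the $n$th-generation descendants are the children of the $(n-1)$th-generation descendants; $W_n$ denotes a random $n$th-generation descendant (each step choosing a child with probability $1/2$). *)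

theory Defs
  imports Complex_Main
begin

datatype tec = TEC (tp: real) (tq: real) (tr: real) (ts: real) (tt: real)

definition is_TEC :: "tec \<Rightarrow> bool" where
  "is_TEC W \<longleftrightarrow> tp W \<ge> 0 \<and> tq W \<ge> 0 \<and> tr W \<ge> 0 \<and> ts W \<ge> 0 \<and> tt W \<ge> 0
     \<and> tp W + tq W + tr W + ts W + tt W = 1"

definition entropy :: "tec \<Rightarrow> real" where
  "entropy W = (tq W + tr W + ts W) / 2 + tt W"

definition edge_mass :: "tec \<Rightarrow> real" where
  "edge_mass W = tq W + tr W + ts W"

text \<open>Quetelet index; only meaningful when 0 < entropy W < 1.\<close>
definition quetelet :: "tec \<Rightarrow> real" where
  "quetelet W = edge_mass W / (entropy W * (1 - entropy W))"

definition balanced :: "tec \<Rightarrow> bool" where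
  "balanced W \<longleftrightarrow> tq W = tr W \<and> tr W = ts W"

fun serial_child :: "tec \<Rightarrow> tec" where
  "serial_child (TEC p q r s t) =
     (let a = p^2; b = p*s + s*q + q*p; c = p*q + q*r + r*p; d = p*r + r*s + s*p
      in TEC a b c d (1 - (a + b + c + d)))"

fun parallel_child :: "tec \<Rightarrow> tec" where
  "parallel_child (TEC p q r s t) =
     (let b = t*s + s*q + q*t; c = t*q + q*r + r*t; d = t*r + r*s + s*t; e = t^2
      in TEC (1 - (b + c + d + e)) b c d e)"

text \<open>Descendant reached by a sequence of choices (True = serial, False = parallel);
  the n-th generation descendants are exactly the descendant bs W with length bs = n.\<close>
fun descendant :: "bool list \<Rightarrow> tec \<Rightarrow> tec" where
  "descendant [] W = W"
| "descendant (b # bs) W = (if b then serial_child else parallel_child) (descendant bs W)"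

end

theory Submission
  imports Defs
begin

lemma poly_growth:
  fixes Q g :: real
  assumes "0 \<le> Q" "Q^2 + 8*Q \<le> 12" "0 \<le> g" "g \<le> 1" "Q*g \<le> 2" "Q*(1-g) \<le> 2"
  shows "(1 + g*(1 - 2*Q/3 - Q^2/12)/3) * ((1 - Q^2*g^2/12)*(2 - g + Q^2*g*(1-g)^2/12))
          \<le> 2*(1 - Q*g/3)"
proof -
  define D1 where "D1 = 1 - Q^2*g^2/12"
  define D2 where "D2 = 2 - g + Q^2*g*(1-g)^2/12"
  define m where "m = 1 - 2*Q/3 - Q^2/12"
  define M where "M = m + Q^2*2*g*(2-g)/12 + Q^4*g^2*(1-g)^2/144"
  have id: "2*(1-Q*g/3) - D1*D2 = g*M"
    unfolding D1_def D2_def M_def m_def by (simp add: algebra_simps power2_eq_square power3_eq_cube power4_eq_xxxx divide_simps)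
  have mM: "m \<le> M" unfolding M_def using assms by (simp add: mult_nonneg_nonneg)
  have m0: "0 \<le> m" unfolding m_def using assms by simp
  have qg0: "0 \<le> Q*g" using assms by simp
  have qg2: "(Q*g)^2 \<le> 4" using qg0 assms(5)
    by (metis power_mono power2_eq_square numeral_times_numeral num_double semiring_norm(1) numeral_Bit0 mult_2_right) 
  have D1le: "D1 \<le> 1" unfolding D1_def by simp
  have D1ge: "0 \<le> D1" unfolding D1_def using qg2 by (simp add: power_mult_distrib)
  have "Q^2*g*(1-g)^2 = (Q*g)*(Q*(1-g))*(1-g)" by (simp add: power2_eq_square)
  also have "\<dots> \<le> 2*2*1"
    using assms by (intro mult_mono) (auto simp: mult_nonneg_nonneg)
  finally have "Q^2*g*(1-g)^2 \<le> 4" by simp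
  hence D2le: "D2 \<le> 3" and D2ge: "0 \<le> D2" unfolding D2_def using assms by (auto intro!: add_nonneg_nonneg)
  have DD: "D1*D2 \<le> 3" using D1le D1ge D2le D2ge by (metis mult_mono' mult_1 zero_le_one)
  have "(1 + g*m/3)*(D1*D2) = D1*D2 + g*m*(D1*D2)/3" by (simp add: algebra_simps)
  also have "\<dots> \<le> D1*D2 + g*m"
    using DD m0 assms(3) by (simp add: mult_left_mono mult_nonneg_nonneg)
  also have "\<dots> \<le> D1*D2 + g*M" using mM assms(3) by (simp add: mult_left_mono)
  finally have "(1 + g*m/3)*(D1*D2) \<le> 2*(1-Q*g/3)" using id by simp
  thus ?thesis unfolding D1_def D2_def m_def by simp
qed



lemma pos_cancel: "0 < (c::real) \<Longrightarrow> 0 \<le> c * x \<Longrightarrow> 0 \<le> x"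
  by (simp add: zero_le_mult_iff)

lemma F2_nonneg:
  fixes T g :: real
  assumes "0 \<le> T" "T \<le> 13/10" "0 \<le> g" "g \<le> 1"
  shows "0 \<le> 4/3 - T/3 - 2*T*g/3 + g^2*(T*(2*T/3 + T^2/12 - 2/3))"
proof (cases "0 \<le> T*(2*T/3 + T^2/12 - 2/3)")
  case True
  have "T*g \<le> T" using assms by (simp add: mult_left_le)
  moreover have "0 \<le> g^2*(T*(2*T/3 + T^2/12 - 2/3))" using True by simp
  ultimately show ?thesis using assms by linarith
next
  case False
  hence c: "T*(2*T/3 + T^2/12 - 2/3) < 0" by simp
  have g2: "g^2 \<le> 1" using assms by (simp add: power_le_one)
  have "g^2*(T*(2*T/3 + T^2/12 - 2/3)) \<ge> 1*(T*(2*T/3 + T^2/12 - 2/3))"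
    using c g2 by (intro mult_right_mono_neg) auto
  moreover have "T*(2*T/3 + T^2/12 - 2/3) \<ge> T*(2*T/3 - 2/3)" using assms by (simp add: mult_left_mono)
  moreover have "T*g \<le> T" using assms by (simp add: mult_left_le)
  moreover have "0 \<le> 4/3 - T + T*(2*T/3 - 2/3)"
  proof -
    have "4/3 - T + T*(2*T/3 - 2/3) = 2/3*(T - 5/4)^2 + 7/24" by (simp add: algebra_simps power2_eq_square)
    moreover have "0 \<le> 2/3*(T - 5/4)^2" by simp
    ultimately show ?thesis by linarith
  qed
  ultimately show ?thesis by linarith
qed

lemma poly_inv:
  fixes Q g T :: real
  assumes "0 \<le> T" "T^2 + 8*T \<le> 12" "T \<le> Q" "0 < g" "g \<le> 1" "Q*g \<le> 2"
  shows "T*((1 - Q^2*g^2/12)*(2 - g + Q^2*g*(1-g)^2/12)) \<le> Q*(2*(1 - Q*g/3))"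
proof -
  have T13: "T \<le> 13/10"
  proof (rule ccontr)
    assume "\<not> T \<le> 13/10"
    hence "T*T > 13/10*(13/10)" by (intro mult_strict_mono) auto
    thus False using assms(2) \<open>\<not> T \<le> 13/10\<close> by (simp add: power2_eq_square)
  qed
  define A where "A = Q*g"
  define F where "F = (\<lambda>A. (A - g*T)*(2 - 2*A/3 - T*g*(2/3+T/12) - T*A/12) + T*A^2*g*(2-g)/6)"
  define k where "k = 2/3 + T/12 - T*g*(2-g)/6"
  have id1: "(2 - g*T)*F A = k*(2-g*T)*(A - g*T)*(2-A) + F (g*T)*(2-A) + F 2*(A - g*T)"
    unfolding F_def k_def by (simp add: field_simps) (simp add: algebra_simps power2_eq_square)
  have Fa: "F (g*T) = T^3*g^3*(2-g)/6" unfolding F_def by (simp add: algebra_simps power2_eq_square power3_eq_cube)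
  have Fb: "F 2 = 4/3 - T/3 - 2*T*g/3 + g^2*(T*(2*T/3 + T^2/12 - 2/3))"
    unfolding F_def by (simp add: field_simps) (simp add: algebra_simps power2_eq_square)
  have gg: "g*(2-g) \<le> 1" proof - have "1 - g*(2-g) = (1-g)^2" by (simp add: algebra_simps power2_eq_square) thus ?thesis by (metis diff_ge_0_iff_ge zero_le_power2) qed
  have k0: "0 \<le> k" unfolding k_def using gg assms T13 mult_left_mono[OF gg assms(1)] by simp
  have gT: "g*T \<le> A" unfolding A_def using assms by (simp add: mult.commute mult_left_mono)
  have A2: "A \<le> 2" unfolding A_def using assms by simp
  have gT2: "g*T < 2" proof - have "g*T \<le> 1*T" using assms by (intro mult_right_mono) auto thus ?thesis using T13 by simp qed
  have Fa0: "0 \<le> F (g*T)" unfolding Fa using assms by simp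
  have Fb0: "0 \<le> F 2" unfolding Fb using F2_nonneg assms T13 by simp
  have t1: "0 \<le> k*(2-g*T)*(A - g*T)*(2-A)"
    using k0 gT A2 gT2 by (intro mult_nonneg_nonneg) auto
  have t2: "0 \<le> F (g*T)*(2-A)" using Fa0 A2 by simp
  have t3: "0 \<le> F 2*(A - g*T)" using Fb0 gT by simp
  have "0 \<le> (2 - g*T)*F A" unfolding id1 using t1 t2 t3 by linarith
  hence FA: "0 \<le> F A" by (rule pos_cancel[rotated]) (use gT2 in linarith)
  have id2: "g*(Q*(2*(1 - Q*g/3)) - T*((1 - Q^2*g^2/12)*(2 - g + Q^2*g*(1-g)^2/12)))
     = F A + T*g^2*(1 - 2*T/3 - T^2/12) + T*A^4*(1-g)^2/144"
    unfolding F_def A_def by (simp add: field_simps) (simp add: algebra_simps power2_eq_square power4_eq_xxxx)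
  have m0: "0 \<le> 1 - 2*T/3 - T^2/12" using assms by simp
  have "0 \<le> g*(Q*(2*(1 - Q*g/3)) - T*((1 - Q^2*g^2/12)*(2 - g + Q^2*g*(1-g)^2/12)))"
  proof -
    have u1: "0 \<le> T*g^2*(1 - 2*T/3 - T^2/12)" using m0 assms(1) by simp
    have u2: "0 \<le> T*A^4*(1-g)^2/144" using assms(1) by simp
    show ?thesis unfolding id2 using FA u1 u2 by linarith
  qed
  hence "0 \<le> Q*(2*(1 - Q*g/3)) - T*((1 - Q^2*g^2/12)*(2 - g + Q^2*g*(1-g)^2/12))" using assms(4) by (rule pos_cancel[rotated])
  thus ?thesis by linarith
qed


lemma abs_step:
  fixes h E T :: real
  assumes h0: "0 < h" and h1: "h < 1" and E0: "0 \<le> E" and Eh: "E \<le> 2*h" and Eg: "E \<le> 2*(1-h)"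
  defines "Q \<equiv> E/(h*(1-h))" and "h' \<equiv> h^2 - E^2/12" and "E' \<equiv> 2*h*E - 2*E^2/3"
  shows "2*h^2/3 \<le> h'" and "(1-h)*(1+h) \<le> 1 - h'"
    and "0 \<le> T \<Longrightarrow> T^2 + 8*T \<le> 12 \<Longrightarrow> T \<le> Q \<Longrightarrow> T \<le> E'/(h'*(1-h'))"
    and "0 \<le> T \<Longrightarrow> T^2 + 8*T \<le> 12 \<Longrightarrow> Q \<le> T \<Longrightarrow>
           Q*(1 + (1-h)*(1 - 2*T/3 - T^2/12)/3) \<le> E'/(h'*(1-h'))"
    and "0 \<le> Q"
proof -
  define g where "g = 1 - h"
  have g0: "0 < g" and g1: "g < 1" using h0 h1 unfolding g_def by auto
  have hg0: "h*g \<noteq> 0" using h0 g0 by simp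
  have E_eq: "E = Q*h*g" unfolding Q_def g_def using hg0 g_def by (simp add: field_simps)
  show Q0: "0 \<le> Q" unfolding Q_def using E0 h0 h1 by simp
  have Qg: "Q*g \<le> 2"
  proof -
    have "Q*g*h \<le> 2*h" using Eh E_eq by (simp add: algebra_simps)
    thus ?thesis using h0 by simp
  qed
  have Qh: "Q*(1-g) \<le> 2"
  proof -
    have "Q*h*g \<le> 2*g" using Eg unfolding E_eq g_def[symmetric] .
    hence "Q*h \<le> 2" using g0 by simp
    thus ?thesis using g_def by simp
  qed
  have E2: "E^2 \<le> 4*h^2"
  proof -
    have "E^2 \<le> (2*h)^2" using E0 Eh by (intro power_mono) auto
    thus ?thesis by (simp add: power_mult_distrib)
  qed
  show "2*h^2/3 \<le> h'" unfolding h'_def using E2 by simp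
  show "(1-h)*(1+h) \<le> 1 - h'" unfolding h'_def by (simp add: algebra_simps power2_eq_square)
  define D1 where "D1 = 1 - Q^2*g^2/12"
  define D2 where "D2 = 2 - g + Q^2*g*(1-g)^2/12"
  have qg2: "(Q*g)^2 \<le> 4"
  proof -
    have "(Q*g)^2 \<le> 2^2" using Qg Q0 g0 by (intro power_mono) auto
    thus ?thesis by simp
  qed
  have D1pos: "0 < D1" unfolding D1_def using qg2 by (simp add: power_mult_distrib)
  have D2pos: "0 < D2"
  proof -
    have "0 \<le> Q^2*g*(1-g)^2/12" using g0 by simp
    thus ?thesis unfolding D2_def using g1 by linarith
  qed
  have hD1: "h' = h^2*D1" unfolding h'_def D1_def E_eq by (simp add: algebra_simps power2_eq_square)
  have gD2: "1 - h' = g*D2" unfolding h'_def D2_def E_eq g_def by (simp add: algebra_simps power2_eq_square)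
  have EE: "E' = Q*(h^2*g)*(2*(1 - Q*g/3))" unfolding E'_def E_eq g_def by (simp add: algebra_simps power2_eq_square)
  have Qform: "E'/(h'*(1-h')) = Q*(2*(1 - Q*g/3))/(D1*D2)"
  proof -
    have pp: "h'*(1-h') = (D1*D2)*(h^2*g)" using hD1 gD2 by simp
    have "E'/(h'*(1-h')) = (Q*(2*(1 - Q*g/3)) * (h^2*g))/((D1*D2)*(h^2*g))"
      unfolding pp EE by (simp add: algebra_simps)
    also have "\<dots> = Q*(2*(1 - Q*g/3))/(D1*D2)" using hg0 h0 by simp
    finally show ?thesis .
  qed
  have DD: "0 < D1*D2" using D1pos D2pos by simp
  show "T \<le> E'/(h'*(1-h'))" if "0 \<le> T" "T^2 + 8*T \<le> 12" "T \<le> Q"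
  proof -
    have "T*(D1*D2) \<le> Q*(2*(1 - Q*g/3))" unfolding D1_def D2_def
      using poly_inv[OF that(1,2,3) g0 _ Qg] g1 by simp
    thus ?thesis unfolding Qform using DD by (simp add: pos_le_divide_eq)
  qed
  show "Q*(1 + (1-h)*(1 - 2*T/3 - T^2/12)/3) \<le> E'/(h'*(1-h'))" if "0 \<le> T" "T^2 + 8*T \<le> 12" "Q \<le> T"
  proof -
    have QQ: "Q^2 \<le> T^2" using Q0 that(3) by (intro power_mono) auto
    have Q12: "Q^2 + 8*Q \<le> 12" using QQ that by linarith
    have mm: "1 - 2*T/3 - T^2/12 \<le> 1 - 2*Q/3 - Q^2/12" using QQ that by linarith
    have G: "(1 + g*(1 - 2*Q/3 - Q^2/12)/3) * (D1*D2) \<le> 2*(1 - Q*g/3)"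
      unfolding D1_def D2_def using poly_growth[OF Q0 Q12 _ _ Qg Qh] g0 g1 by simp
    have "(1 + g*(1 - 2*T/3 - T^2/12)/3) \<le> (1 + g*(1 - 2*Q/3 - Q^2/12)/3)"
      using mm g0 by (simp add: mult_left_mono)
    hence "Q*(1 + g*(1 - 2*T/3 - T^2/12)/3) \<le> Q*(1 + g*(1 - 2*Q/3 - Q^2/12)/3)"
      using Q0 by (simp add: mult_left_mono)
    also have "\<dots> \<le> Q*(2*(1 - Q*g/3))/(D1*D2)"
      using G DD Q0 by (simp add: pos_le_divide_eq mult_left_mono mult.assoc)
    finally show ?thesis unfolding Qform g_def .
  qed
qed



definition good :: "tec \<Rightarrow> bool" where
  "good V \<longleftrightarrow> is_TEC V \<and> balanced V \<and> 0 < entropy V \<and> entropy V < 1"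

lemma good_cases:
  assumes "good V"
  obtains p x t where "V = TEC p x x x t" "0 \<le> p" "0 \<le> x" "0 \<le> t" "p + 3*x + t = 1"
    "0 < 3*x/2 + t" "3*x/2 + t < 1"
proof -
  obtain p q r s t where V: "V = TEC p q r s t" by (cases V)
  with assms show ?thesis unfolding good_def is_TEC_def balanced_def entropy_def
    by (intro that[of p q t]) auto
qed

lemma par_facts:
  assumes "good V"
  defines "h \<equiv> entropy V" and "E \<equiv> edge_mass V"
  shows "entropy (parallel_child V) = h^2 - E^2/12"
    and "edge_mass (parallel_child V) = 2*h*E - 2*E^2/3"
    and "0 \<le> E" "E \<le> 2*h" "E \<le> 2*(1-h)"
    and "is_TEC (parallel_child V)" "balanced (parallel_child V)"
proof -
  obtain p x t where V: "V = TEC p x x x t" "0 \<le> p" "0 \<le> x" "0 \<le> t" "p + 3*x + t = 1"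
    "0 < 3*x/2 + t" "3*x/2 + t < 1" using good_cases[OF assms(1)] by blast
  have h: "h = 3*x/2 + t" and E: "E = 3*x" unfolding h_def E_def V entropy_def edge_mass_def by simp_all
  show "entropy (parallel_child V) = h^2 - E^2/12" unfolding V h E entropy_def
    by (simp add: Let_def field_simps power2_eq_square)
  show "edge_mass (parallel_child V) = 2*h*E - 2*E^2/3" unfolding V h E edge_mass_def
    by (simp add: Let_def field_simps power2_eq_square)
  show "0 \<le> E" "E \<le> 2*h" "E \<le> 2*(1-h)" using V unfolding h E by auto
  show "balanced (parallel_child V)" unfolding V balanced_def by (simp add: Let_def)
  have "0 \<le> 1 - ((t*x + x*x + x*t)*3 + t^2)"
  proof -
    have eq: "(p + 3*x + t)^2 - ((t*x + x*x + x*t)*3 + t^2) = p^2 + 6*x^2 + 6*p*x + 2*p*t"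
      by (simp add: power2_eq_square algebra_simps)
    have "0 \<le> p^2 + 6*x^2 + 6*p*x + 2*p*t" using V by simp
    moreover have "(p + 3*x + t)^2 = 1" using V by simp
    ultimately show ?thesis using eq by linarith
  qed
  thus "is_TEC (parallel_child V)" unfolding V is_TEC_def using V
    by (simp add: Let_def algebra_simps mult_nonneg_nonneg)
qed


definition sw :: "tec \<Rightarrow> tec" where
  "sw V = TEC (tt V) (tq V) (tr V) (ts V) (tp V)"

lemma ser_sw: "serial_child V = sw (parallel_child (sw V))"
  by (cases V) (simp add: sw_def Let_def algebra_simps)

lemma sw_facts:
  assumes "is_TEC V"
  shows "is_TEC (sw V)" "balanced (sw V) = balanced V" "entropy (sw V) = 1 - entropy V"
    "edge_mass (sw V) = edge_mass V" "quetelet (sw V) = quetelet V"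
proof -
  show "is_TEC (sw V)" using assms unfolding is_TEC_def sw_def by auto
  show "balanced (sw V) = balanced V" unfolding balanced_def sw_def by auto
  have sum1: "tp V + tq V + tr V + ts V + tt V = 1" using assms unfolding is_TEC_def by simp
  show e: "entropy (sw V) = 1 - entropy V" using sum1 unfolding sw_def entropy_def by (simp only: tec.sel add_divide_distrib)
  show m: "edge_mass (sw V) = edge_mass V" unfolding edge_mass_def sw_def by auto
  show "quetelet (sw V) = quetelet V" unfolding quetelet_def e m by (simp add: mult.commute)
qed

lemma good_sw: "good V \<Longrightarrow> good (sw V)"
  using sw_facts[of V] unfolding good_def by auto

lemma par_props:
  assumes "good V"
  defines "h \<equiv> entropy V" and "Q \<equiv> quetelet V"
  shows "good (parallel_child V)"
    and "2*h^2/3 \<le> entropy (parallel_child V)"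
    and "(1-h)*(1+h) \<le> 1 - entropy (parallel_child V)"
    and "0 \<le> Q"
    and "0 \<le> T \<Longrightarrow> T^2 + 8*T \<le> 12 \<Longrightarrow> T \<le> Q \<Longrightarrow> T \<le> quetelet (parallel_child V)"
    and "0 \<le> T \<Longrightarrow> T^2 + 8*T \<le> 12 \<Longrightarrow> Q \<le> T \<Longrightarrow>
           Q*(1 + (1-h)*(1 - 2*T/3 - T^2/12)/3) \<le> quetelet (parallel_child V)"
proof -
  have h0: "0 < h" and h1: "h < 1" using assms(1) unfolding good_def h_def by auto
  note pf = par_facts[OF assms(1)]
  note ab = abs_step[OF h0 h1 pf(3) pf(4)[folded h_def] pf(5)[folded h_def]]
  have Qd: "Q = edge_mass V / (h*(1-h))" unfolding Q_def quetelet_def h_def ..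
  have Qc: "quetelet (parallel_child V) = (2*h*edge_mass V - 2*(edge_mass V)^2/3) /
     ((h^2 - (edge_mass V)^2/12)*(1 - (h^2 - (edge_mass V)^2/12)))"
    unfolding quetelet_def pf(1,2) h_def ..
  show e1: "2*h^2/3 \<le> entropy (parallel_child V)" using ab(1) pf(1) h_def by simp
  show e2: "(1-h)*(1+h) \<le> 1 - entropy (parallel_child V)" using ab(2) pf(1) h_def by simp
  show "0 \<le> Q" using ab(5) Qd by simp
  show "good (parallel_child V)"
  proof -
    have "0 < 2*h^2/3" using h0 by simp
    moreover have "0 < (1-h)*(1+h)" using h0 h1 by simp
    ultimately show ?thesis unfolding good_def using pf(6,7) e1 e2 by linarith
  qed
  show "T \<le> quetelet (parallel_child V)" if "0 \<le> T" "T^2 + 8*T \<le> 12" "T \<le> Q"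
    using ab(3)[OF that(1,2)] that(3) unfolding Qc Qd by simp
  show "Q*(1 + (1-h)*(1 - 2*T/3 - T^2/12)/3) \<le> quetelet (parallel_child V)"
    if "0 \<le> T" "T^2 + 8*T \<le> 12" "Q \<le> T"
    using ab(4)[OF that(1,2)] that(3) unfolding Qc Qd by simp
qed

lemma ser_props:
  assumes "good V"
  defines "h \<equiv> entropy V" and "Q \<equiv> quetelet V"
  shows "good (serial_child V)"
    and "2*(1-h)^2/3 \<le> 1 - entropy (serial_child V)"
    and "h*(1+(1-h)) \<le> entropy (serial_child V)"
    and "0 \<le> T \<Longrightarrow> T^2 + 8*T \<le> 12 \<Longrightarrow> T \<le> Q \<Longrightarrow> T \<le> quetelet (serial_child V)"
    and "0 \<le> T \<Longrightarrow> T^2 + 8*T \<le> 12 \<Longrightarrow> Q \<le> T \<Longrightarrow>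
           Q*(1 + h*(1 - 2*T/3 - T^2/12)/3) \<le> quetelet (serial_child V)"
proof -
  have gs: "good (sw V)" using good_sw[OF assms(1)] .
  have tv: "is_TEC V" using assms(1) unfolding good_def by simp
  note pp = par_props[OF gs]
  have gp: "good (parallel_child (sw V))" using pp(1) .
  have tp: "is_TEC (parallel_child (sw V))" using gp unfolding good_def by simp
  have esw: "entropy (sw V) = 1 - h" using sw_facts(3)[OF tv] h_def by simp
  have qsw: "quetelet (sw V) = Q" using sw_facts(5)[OF tv] Q_def by simp
  have es: "entropy (serial_child V) = 1 - entropy (parallel_child (sw V))"
    unfolding ser_sw using sw_facts(3)[OF tp] .
  have qs: "quetelet (serial_child V) = quetelet (parallel_child (sw V))"
    unfolding ser_sw using sw_facts(5)[OF tp] .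
  show "good (serial_child V)" unfolding ser_sw using good_sw[OF gp] .
  show "2*(1-h)^2/3 \<le> 1 - entropy (serial_child V)" using pp(2) esw es by simp
  show "h*(1+(1-h)) \<le> entropy (serial_child V)" using pp(3) esw es by (simp add: mult.commute)
  show "T \<le> quetelet (serial_child V)" if "0 \<le> T" "T^2 + 8*T \<le> 12" "T \<le> Q"
    using pp(5)[OF that(1,2)] that(3) qsw qs by simp
  show "Q*(1 + h*(1 - 2*T/3 - T^2/12)/3) \<le> quetelet (serial_child V)"
    if "0 \<le> T" "T^2 + 8*T \<le> 12" "Q \<le> T"
    using pp(6)[OF that(1,2)] that(3) qsw qs esw by simp
qed



lemma psi_abs:
  fixes h h' :: real
  assumes "0 < h" "h < 1" "2*h^2/3 \<le> h'" "(1-h)*(1+h) \<le> 1 - h'"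
  shows "2/3*(min h (1-h))^2 \<le> min h' (1-h')"
    and "1 - h < 1/4 \<Longrightarrow> min (3/2*min h (1-h)) (1/4) \<le> min h' (1-h')"
proof -
  define p where "p = min h (1-h)"
  have p0: "0 < p" "p \<le> h" "p \<le> 1 - h" "p \<le> 1" using assms unfolding p_def by auto
  have "p^2 \<le> h^2" using p0 by (intro power_mono) auto
  hence a: "2/3*p^2 \<le> h'" using assms(3) by simp
  have "p^2 \<le> p" using p0 by (simp add: power2_eq_square mult_left_le)
  moreover have "1 - h \<le> (1-h)*(1+h)" using assms(1,2) by (simp add: mult_le_cancel_left1)
  ultimately have b: "2/3*p^2 \<le> 1 - h'" using p0 assms(4) by linarith
  show "2/3*(min h (1-h))^2 \<le> min h' (1-h')" using a b unfolding p_def by simp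
  assume c: "1 - h < 1/4"
  hence pe: "p = 1 - h" unfolding p_def by simp
  have "(1-h)*(3/2) \<le> (1-h)*(1+h)" using c assms(2) by (intro mult_left_mono) auto
  hence d: "3/2*p \<le> 1 - h'" using pe assms(4) by simp
  have "(3/4)^2 \<le> h^2" using c by (intro power_mono) auto
  hence "1/4 \<le> h'" using assms(3) by (simp add: power2_eq_square)
  thus "min (3/2*min h (1-h)) (1/4) \<le> min h' (1-h')" using d unfolding p_def[symmetric] by (simp add: min_def)
qed

definition psi :: "tec \<Rightarrow> real" where
  "psi V = min (entropy V) (1 - entropy V)"

lemma step_props:
  fixes b :: bool
  assumes "good V"
  defines "\<rho> \<equiv> (if b then entropy V else 1 - entropy V)"
    and "C \<equiv> (if b then serial_child else parallel_child) V"
  shows "good C"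
    and "0 \<le> T \<Longrightarrow> T^2 + 8*T \<le> 12 \<Longrightarrow> T \<le> quetelet V \<Longrightarrow> T \<le> quetelet C"
    and "0 \<le> T \<Longrightarrow> T^2 + 8*T \<le> 12 \<Longrightarrow> quetelet V \<le> T \<Longrightarrow>
           quetelet V*(1 + \<rho>*(1 - 2*T/3 - T^2/12)/3) \<le> quetelet C"
    and "2/3*(psi V)^2 \<le> psi C"
    and "\<rho> < 1/4 \<Longrightarrow> min (3/2*psi V) (1/4) \<le> psi C"
    and "psi V \<le> \<rho>" and "0 \<le> quetelet V" and "0 \<le> \<rho>"
proof -
  have h0: "0 < entropy V" and h1: "entropy V < 1" using assms(1) unfolding good_def by auto
  note pp = par_props[OF assms(1)]
  note sp = ser_props[OF assms(1)]
  show "0 \<le> quetelet V" using pp(4) .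
  show "psi V \<le> \<rho>" unfolding psi_def \<rho>_def by auto
  show "0 \<le> \<rho>" unfolding \<rho>_def using h0 h1 by auto
  show "good C" unfolding C_def using pp(1) sp(1) by auto
  show "T \<le> quetelet C" if "0 \<le> T" "T^2 + 8*T \<le> 12" "T \<le> quetelet V"
    unfolding C_def using pp(5)[OF that] sp(4)[OF that] by auto
  show "quetelet V*(1 + \<rho>*(1 - 2*T/3 - T^2/12)/3) \<le> quetelet C"
    if "0 \<le> T" "T^2 + 8*T \<le> 12" "quetelet V \<le> T"
    unfolding C_def \<rho>_def using pp(6)[OF that] sp(5)[OF that] by auto
  note pa = psi_abs[OF h0 h1 pp(2) pp(3)]
  have h0': "0 < 1 - entropy V" "1 - entropy V < 1" using h0 h1 by auto
  have sp3: "(1 - (1 - entropy V)) * (1 + (1 - entropy V)) \<le> 1 - (1 - entropy (serial_child V))"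
    using sp(3) by simp
  note sa = psi_abs[OF h0' sp(2) sp3]
  have mm: "min (1 - entropy V) (1 - (1 - entropy V)) = psi V" unfolding psi_def by auto
  have mm2: "min (1 - entropy (serial_child V)) (1 - (1 - entropy (serial_child V))) = psi (serial_child V)"
    unfolding psi_def by auto
  show "2/3*(psi V)^2 \<le> psi C"
    using pa(1) sa(1) unfolding C_def mm mm2 by (auto simp: psi_def)
  show "min (3/2*psi V) (1/4) \<le> psi C" if "\<rho> < 1/4"
  proof (cases b)
    case True
    then show ?thesis using sa(2) that unfolding C_def \<rho>_def mm mm2 by simp
  next
    case False
    then show ?thesis using pa(2) that unfolding C_def \<rho>_def by (simp add: psi_def)
  qed
qed



primrec dseq :: "real \<Rightarrow> nat \<Rightarrow> real" where
  "dseq d 0 = d"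
| "dseq d (Suc a) = 2/3*(dseq d a)^2"

lemma dseq_bounds:
  assumes "0 < d" "d \<le> 1/4"
  shows "0 < dseq d a \<and> dseq d a \<le> 1/4"
proof (induction a)
  case 0 then show ?case using assms by simp
next
  case (Suc a)
  hence a: "0 < dseq d a" "dseq d a \<le> 1/4" by auto
  have m: "dseq d a * dseq d a \<le> 1/4 * (1/4)" using a by (intro mult_mono) auto
  have "0 < dseq d a * dseq d a" using a by simp
  then show ?case using m by (simp add: power2_eq_square)
qed

lemma min_step: "min (x::real) (1/4) \<le> p \<Longrightarrow> min (3/2*x) (1/4) \<le> min (3/2*p) (1/4)"
proof (cases "x \<le> 1/4")
  case True
  assume h: "min x (1/4) \<le> p"
  hence "x \<le> p" using True by simp
  hence "3/2*x \<le> 3/2*p" by simp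
  thus ?thesis by (intro min.mono) auto
next
  case False
  assume h: "min x (1/4) \<le> p"
  hence "1/4 \<le> p" using False by simp
  hence "min (3/2*p) (1/4) = 1/4" by simp
  thus ?thesis by simp
qed

lemma desc_good: "good W \<Longrightarrow> good (descendant bs W)"
proof (induction bs)
  case Nil then show ?case by simp
next
  case (Cons b bs)
  show ?case using step_props(1)[OF Cons.IH[OF Cons.prems], where b=b] by (simp only: descendant.simps)
qed

theorem mainTheorem7:
  fixes \<epsilon> :: real and W :: tec
  assumes "\<epsilon> > 0"
    and "is_TEC W" and "balanced W"
    and "0 < entropy W" and "entropy W < 1"
    and "quetelet W \<le> (2 * sqrt 7 - 4) - \<epsilon>"
  shows "\<exists>m::nat. m > 0 \<and> (\<forall>n \<ge> m. \<forall>bs. length bs = n \<longrightarrow>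
           quetelet (descendant bs W) \<ge> quetelet W * (1 + \<epsilon> / 8))"
proof -
  have gW: "good W" using assms unfolding good_def by auto
  define Q0 where "Q0 = quetelet W"
  have Q0nn: "0 \<le> Q0" using step_props(7)[OF gW] Q0_def by simp
  show ?thesis
  proof (cases "Q0 = 0")
    case True
    show ?thesis
    proof (intro exI[of _ 1] conjI allI impI)
      fix n :: nat and bs :: "bool list"
      show "quetelet W * (1 + \<epsilon> / 8) \<le> quetelet (descendant bs W)"
        using step_props(7)[OF desc_good[OF gW, of bs]] True Q0_def by simp
    qed simp
  next
    case False
    hence Q0pos: "0 < Q0" using Q0nn by simp
    define \<alpha> where "\<alpha> = 2 * sqrt 7 - 4"
    have ss: "sqrt 7 * sqrt 7 = 7" by simp
    have al: "\<alpha>^2 + 8*\<alpha> = 12" unfolding \<alpha>_def power2_eq_square using ss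
      by (simp add: algebra_simps)
    have s3: "sqrt 7 < 3" by (rule real_less_lsqrt) auto
    have al8: "\<alpha> < 8" unfolding \<alpha>_def using s3 by simp
    define T where "T = Q0 * (1 + \<epsilon>/8)"
    have Q0a: "Q0 \<le> \<alpha> - \<epsilon>" using assms(6) Q0_def \<alpha>_def by simp
    have T0: "0 \<le> T" unfolding T_def using Q0pos assms(1) by simp
    have Ta: "T < \<alpha>"
    proof -
      have "Q0*\<epsilon> < 8*\<epsilon>" using Q0a al8 assms(1) by simp
      thus ?thesis unfolding T_def using Q0a by (simp add: algebra_simps)
    qed
    have "T^2 < \<alpha>^2" using T0 Ta by (intro power_strict_mono) auto
    hence Tc: "T^2 + 8*T < 12" using al Ta by linarith
    hence Tc': "T^2 + 8*T \<le> 12" by simp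
    define c where "c = 1 - 2*T/3 - T^2/12"
    have c0: "0 < c" unfolding c_def using Tc by simp
    define \<gamma> where "\<gamma> = c/12"
    have g0: "0 < \<gamma>" unfolding \<gamma>_def using c0 by simp
    obtain J :: nat where J: "\<epsilon>/8/\<gamma> < real J" using reals_Archimedean2 by blast
    have Jg: "1 + \<epsilon>/8 \<le> (1+\<gamma>)^J"
    proof -
      have "\<epsilon>/8 < real J * \<gamma>" using J g0 by (simp add: field_simps)
      moreover have "1 + real J * \<gamma> \<le> (1+\<gamma>)^J" using Bernoulli_inequality[of \<gamma> J] g0 by simp
      ultimately show ?thesis by simp
    qed
    have J0: "0 < J"
    proof (rule ccontr)
      assume "\<not> 0 < J" hence "J = 0" by simp
      thus False using Jg assms(1) by simp
    qed
    define d0 where "d0 = min (psi W) (1/4)"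
    have d0p: "0 < d0" "d0 \<le> 1/4" unfolding d0_def psi_def using assms(4,5) by (auto simp: min_def)
    define \<delta> where "\<delta> = dseq d0"
    have \<delta>b: "\<And>a. 0 < \<delta> a \<and> \<delta> a \<le> 1/4" unfolding \<delta>_def using dseq_bounds[OF d0p] by blast
    define N where "N = (\<lambda>a. SOME n::nat. 1/4 \<le> (3/2)^n * \<delta> a)"
    have N: "\<And>a. 1/4 \<le> (3/2)^(N a) * \<delta> a"
    proof -
      fix a
      obtain n :: nat where n: "1/(4*\<delta> a) < (3/2)^n" using real_arch_pow[of "3/2::real"] by auto
      have "1/4 \<le> (3/2)^n * \<delta> a" using n \<delta>b[of a] by (simp add: field_simps)
      thus "1/4 \<le> (3/2)^(N a) * \<delta> a" unfolding N_def by (rule someI)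
    qed
    define S where "S = (\<lambda>a. \<Sum>k<a. N k + 1)"
    have SSuc: "\<And>a. S (Suc a) = S a + N a + 1" unfolding S_def by simp
    have Smono: "\<And>a b. a \<le> b \<Longrightarrow> S a \<le> S b" unfolding S_def
      by (intro sum_mono2) auto
    define I where "I = (\<lambda>U n. T \<le> quetelet U \<or> (\<exists>a i. a < J \<and> i \<le> N a \<and> n \<le> S a + i \<and>
        Q0*(1+\<gamma>)^a \<le> quetelet U \<and> min ((3/2)^i * \<delta> a) (1/4) \<le> psi U))"
    have inv: "I (descendant bs W) (length bs)" for bs
    proof (induction bs)
      case Nil
      have "min ((3/2)^0 * \<delta> 0) (1/4) \<le> psi W" unfolding \<delta>_def d0_def by simp
      then show ?case unfolding I_def using J0 Q0_def by (intro disjI2 exI[of _ 0]) auto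
    next
      case (Cons b bs)
      define U where "U = descendant bs W"
      define \<rho> where "\<rho> = (if b then entropy U else 1 - entropy U)"
      have gU: "good U" unfolding U_def using desc_good[OF gW] .
      define C where "C = (if b then serial_child else parallel_child) U"
      have DC: "C = (if b then serial_child else parallel_child) U" unfolding C_def ..
      note sp = step_props(1-6)[OF gU, where b=b, folded \<rho>_def DC]
      note sp8 = step_props(8)[OF gU, where b=b, folded \<rho>_def]
      have IU: "I U (length bs)" using Cons.IH unfolding U_def .
      have DC2: "descendant (b # bs) W = C" unfolding C_def U_def by simp
      have "I C (length (b # bs))"
      proof (cases "T \<le> quetelet U")
        case True
        then show ?thesis unfolding I_def using sp(2)[OF T0 Tc'] by simp
      next
        case False
        then obtain a i where ai: "a < J" "i \<le> N a" "length bs \<le> S a + i"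
          "Q0*(1+\<gamma>)^a \<le> quetelet U" "min ((3/2)^i * \<delta> a) (1/4) \<le> psi U"
          using IU unfolding I_def by blast
        have QUT: "quetelet U \<le> T" using False by simp
        have grow: "quetelet U * (1 + \<rho>*c/3) \<le> quetelet (C)"
          using sp(3)[OF T0 Tc' QUT] unfolding c_def by (simp add: mult.assoc)
        have QU0: "0 \<le> quetelet U" using step_props(7)[OF gU] .
        have da: "\<delta> a \<le> psi U"
        proof -
          have x: "\<delta> a \<le> (3/2)^i * \<delta> a" using \<delta>b[of a] by (simp add: mult_le_cancel_right1)
          have y: "\<delta> a \<le> min ((3/2)^i * \<delta> a) (1/4)" using x \<delta>b[of a] by simp
          show ?thesis using y ai(5) by linarith
        qed
        show ?thesis
        proof (cases "1/4 \<le> \<rho>")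
          case True
          have "\<gamma> \<le> \<rho>*c/3" unfolding \<gamma>_def using True c0 by (simp add: field_simps)
          hence "quetelet U * (1+\<gamma>) \<le> quetelet U * (1 + \<rho>*c/3)" using QU0 by (simp add: mult_left_mono)
          moreover have "Q0*(1+\<gamma>)^a*(1+\<gamma>) \<le> quetelet U * (1+\<gamma>)" using ai(4) g0 by (simp add: mult_right_mono)
          ultimately have Qn0: "Q0*(1+\<gamma>)^a*(1+\<gamma>) \<le> quetelet C"
            using grow by linarith
          have eqp: "Q0*(1+\<gamma>)^(Suc a) = Q0*(1+\<gamma>)^a*(1+\<gamma>)" by (simp add: algebra_simps)
          have Qn: "Q0*(1+\<gamma>)^(Suc a) \<le> quetelet C" using Qn0 eqp by linarith
          show ?thesis
          proof (cases "Suc a = J")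
            case True
            have "T \<le> Q0*(1+\<gamma>)^J" unfolding T_def using Jg Q0pos by (simp add: mult_left_mono)
            then show ?thesis unfolding I_def using Qn True by simp
          next
            case False
            have p1: "2/3*(\<delta> a)^2 \<le> 2/3*(psi U)^2" using da \<delta>b[of a] by (simp add: power_mono)
            have p2: "min ((3/2)^0 * \<delta> (Suc a)) (1/4) = \<delta> (Suc a)" using \<delta>b[of "Suc a"] by simp
            have "min ((3/2)^0 * \<delta> (Suc a)) (1/4) \<le> psi (C)"
              unfolding p2 using p1 sp(4) unfolding \<delta>_def by simp
            moreover have "length (b # bs) \<le> S (Suc a) + 0" using SSuc ai(2,3) by simp
            ultimately show ?thesis unfolding I_def using False ai(1) Qn
              by (intro disjI2 exI[of _ "Suc a"] exI[of _ 0]) auto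
          qed
        next
          case False
          hence r: "\<rho> < 1/4" by simp
          have "0 \<le> \<rho>*c/3" using sp8 c0 by simp
          hence "quetelet U \<le> quetelet U * (1 + \<rho>*c/3)" using QU0 by (simp add: mult_le_cancel_left1)
          hence Qn: "Q0*(1+\<gamma>)^a \<le> quetelet (C)" using grow ai(4) by linarith
          have iN: "i < N a"
          proof (rule ccontr)
            assume "\<not> i < N a" hence "i = N a" using ai(2) by simp
            hence "1/4 \<le> psi U" using ai(5) N[of a] by (simp add: min_def split: if_splits)
            thus False using sp(6) r by simp
          qed
          have m1: "min ((3/2)^(Suc i) * \<delta> a) (1/4) \<le> min (3/2 * psi U) (1/4)"
          proof -
            have e: "(3/2)^(Suc i) * \<delta> a = 3/2 * ((3/2)^i * \<delta> a)" by simp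
            show ?thesis unfolding e by (rule min_step[OF ai(5)])
          qed
          have "min ((3/2)^(Suc i) * \<delta> a) (1/4) \<le> psi C" using m1 sp(5)[OF r] by (rule order_trans)
          thus ?thesis unfolding I_def using ai(1,3) iN Qn
            by (intro disjI2 exI[of _ a] exI[of _ "Suc i"]) auto
        qed
      qed
      thus ?case unfolding DC2 .
    qed
    show ?thesis
    proof (intro exI[of _ "S J + 1"] conjI allI impI)
      fix n :: nat and bs :: "bool list"
      assume n: "S J + 1 \<le> n" and lb: "length bs = n"
      have "T \<le> quetelet (descendant bs W)"
      proof (rule ccontr)
        assume nT: "\<not> T \<le> quetelet (descendant bs W)"
        then obtain a i where ai: "a < J" "i \<le> N a" "n \<le> S a + i"
          using inv[of bs] lb unfolding I_def by blast
        have "S (Suc a) \<le> S J" using ai(1) Smono by simp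
        thus False using SSuc[of a] ai n by simp
      qed
      thus "quetelet W * (1 + \<epsilon> / 8) \<le> quetelet (descendant bs W)" unfolding T_def Q0_def .
    qed simp
  qed
qed

end
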